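(* Let $m\ge 3$. Call $\mathbf{x}=(x_1,\ldots,x_m)\in\mathbb{R}^m$ generic if the $\binom{m}{2}$ midpoints $x_{ij}:=(x_i+x_j)/2$, $1\le i<j\le m$, are pairwise distinct (in particular the $x_i$ are pairwise distinct). For such $\mathbf{x}$ define its ranking pattern $$\mathrm{RP}^{\mathrm{UF}}(\mathbf{x})=\{(i_1\cdots i_m)\in\mathbb{P}_m:\ |y-x_{i_1}|<|y-x_{i_2}|<\cdots<|y-x_{i_m}|\text{ for some }y\in\mathbb{R}\},$$ where $\mathbb{P}_m$ is the set of permutations $(i_1\cdots i_m)$ of $[m]=\{1,\ldots,m\}$. Let $$r(m)=\bigl|\{\mathrm{RP}^{\mathrm{UF}}(\mathbf{x}):\ \mathbf{x}\in\mathbb{R}^m\text{ generic}\}\bigr|,\qquad r_0(m)=\bigl|\{\mathrm{RP}^{\mathrm{UF}}(\mathbf{x}):\ \mathbf{x}\in\mathbb{R}^m\text{ generic},\ x_1<\cdots<x_m\}\bigr|.$$ Let $\mathcal{M}_m$ be the mid-hyperplane arrangement in $\mathbb{R}^m$ consisting of the hyperplanes $\{x_i=x_j\}$ for $1\le i<j\le m$ together with the hyperplanes $\{x_i+x_j=x_k+x_l\}$ for all $(i,j,k,l)$ with $i,j,k,l$ pairwise distinct, $1\le i<j\le m$, $i<k<l\le m$. Then $$r(m)=\frac{m!}{2}\,r_0(m)=\frac{|\mathrm{ch}(\mathcal{M}_m)|}{2},$$ where $\mathrm{ch}(\mathcal{M}_m)$ denotes the set of chambers (connected components of the complement of the union of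 the hyperplanes) of $\mathcal{M}_m$.
   Context: Generic $\mathbf{x}$ are exactly the points of $\mathbb{R}^m$ not lying on any hyperplane of $\mathcal{M}_m$. *)

theory Defs
  imports "HOL-Analysis.Analysis"
begin

text \<open>Indices are 0-based: [m] is rendered as {0..<m}.  A point of R^m is a
function nat => real vanishing outside {0..<m}; nat => real carries the product
topology, so this subspace is (homeomorphic to) Euclidean R^m.\<close>

definition Rm :: "nat \<Rightarrow> (nat \<Rightarrow> real) set" where
  "Rm m = {x. \<forall>i\<ge>m. x i = 0}"

definition generic :: "nat \<Rightarrow> (nat \<Rightarrow> real) \<Rightarrow> bool" where
  "generic m x \<longleftrightarrow>
     (\<forall>i j k l. i < j \<and> j < m \<and> k < l \<and> l < m \<and> (i, j) \<noteq> (k, l)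
        \<longrightarrow> (x i + x j) / 2 \<noteq> (x k + x l) / 2)"

definition perms :: "nat \<Rightarrow> nat list set" where
  "perms m = {p. distinct p \<and> set p = {0..<m}}"

definition ranking_pattern :: "nat \<Rightarrow> (nat \<Rightarrow> real) \<Rightarrow> nat list set" where
  "ranking_pattern m x =
     {p \<in> perms m. \<exists>y::real. \<forall>k. Suc k < m \<longrightarrow> \<bar>y - x (p ! k)\<bar> < \<bar>y - x (p ! Suc k)\<bar>}"

definition r :: "nat \<Rightarrow> nat" where
  "r m = card {ranking_pattern m x | x. x \<in> Rm m \<and> generic m x}"

definition r0 :: "nat \<Rightarrow> nat" where
  "r0 m = card {ranking_pattern m x | x. x \<in> Rm m \<and> generic m x \<and>
                  (\<forall>i. Suc i < m \<longrightarrow> x i < x (Suc i))}"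

definition mid_hyperplanes :: "nat \<Rightarrow> (nat \<Rightarrow> real) set set" where
  "mid_hyperplanes m =
     {{x \<in> Rm m. x i = x j} | i j. i < j \<and> j < m} \<union>
     {{x \<in> Rm m. x i + x j = x k + x l} | i j k l.
        i < j \<and> j < m \<and> i < k \<and> k < l \<and> l < m \<and>
        i \<noteq> k \<and> i \<noteq> l \<and> j \<noteq> k \<and> j \<noteq> l}"

definition chambers :: "nat \<Rightarrow> (nat \<Rightarrow> real) set set" where
  "chambers m =
     (let C = Rm m - \<Union>(mid_hyperplanes m)
      in {connected_component_set C x | x. x \<in> C})"

end

theory Submission
  imports Defs
begin


definition GG :: "nat \<Rightarrow> (nat \<Rightarrow> real) set" where
  "GG m = {x \<in> Rm m. generic m x}"

lemma genchar:
  "generic m x \<longleftrightarrow> (\<forall>a b c d. a<m \<longrightarrow> b<m \<longrightarrow> c<m \<longrightarrow> d<m \<longrightarrow> a\<noteq>b \<longrightarrow> c\<noteq>d \<longrightarrow>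
      x a + x b = x c + x d \<longrightarrow> (a=c \<and> b=d) \<or> (a=d \<and> b=c))" (is "?L \<longleftrightarrow> ?R")
proof
  assume L: ?L
  show ?R
  proof (intro allI impI)
    fix a b c d assume h: "a<m" "b<m" "c<m" "d<m" "a\<noteq>b" "c\<noteq>d" "x a + x b = x c + x d"
    have "(min a b, max a b) = (min c d, max c d)"
    proof (rule ccontr)
      assume "(min a b, max a b) \<noteq> (min c d, max c d)"
      moreover have "x (min a b) + x (max a b) = x (min c d) + x (max c d)"
        using h by (auto simp: min_def max_def)
      moreover have "min a b < max a b" "max a b < m" "min c d < max c d" "max c d < m" using h by auto
      ultimately show False using L unfolding generic_def by fastforce
    qed
    then show "(a=c \<and> b=d) \<or> (a=d \<and> b=c)" using h by (auto simp: min_def max_def split: if_splits)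
  qed
next
  assume R: ?R
  show ?L unfolding generic_def
  proof (intro allI impI)
    fix i j k l assume h: "i < j \<and> j < m \<and> k < l \<and> l < m \<and> (i, j) \<noteq> (k, l)"
    show "(x i + x j) / 2 \<noteq> (x k + x l) / 2"
      using R[rule_format, of i j k l] h by auto
  qed
qed

lemma gen_distinct:
  assumes "m \<ge> 3" "generic m x" "a < m" "b < m" "a \<noteq> b"
  shows "x a \<noteq> x b"
proof -
  obtain e where e: "e < m" "e \<noteq> a" "e \<noteq> b"
    using assms by (metis (full_types) le_less_trans less_Suc_eq numeral_3_eq_3 zero_less_Suc One_nat_def less_2_cases_iff less_one nat_neq_iff)
  show ?thesis
    using assms(2)[unfolded genchar, rule_format, of a e b e] assms e by auto
qed

lemma gen_zero:
  assumes "m \<ge> 3" "generic m x" "a < m" "b < m" "c < m" "d < m" "(a = b) = (c = d)"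
  shows "x a + x b - x c - x d = 0 \<longleftrightarrow> (a=c \<and> b=d) \<or> (a=d \<and> b=c)"
proof (cases "a = b")
  case True
  then have "c = d" using assms by auto
  then show ?thesis using True gen_distinct[OF assms(1,2), of a c] assms by auto
next
  case False
  then have cd: "c \<noteq> d" using assms by auto
  have e: "x a + x b - x c - x d = 0 \<longleftrightarrow> x a + x b = x c + x d" by linarith
  show ?thesis unfolding e
  proof
    assume "x a + x b = x c + x d"
    then show "(a=c \<and> b=d) \<or> (a=d \<and> b=c)"
      using assms(2)[unfolded genchar, rule_format, of a b c d] assms False cd by blast
  next
    assume "(a=c \<and> b=d) \<or> (a=d \<and> b=c)"
    then show "x a + x b = x c + x d" by auto
  qed
qed

lemma absdist: "\<bar>y - u\<bar> < \<bar>y - v\<bar> \<longleftrightarrow> (v - u) * (2*y - u - v) < (0::real)"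
proof -
  have "\<bar>y - u\<bar> < \<bar>y - v\<bar> \<longleftrightarrow> (y-u)^2 < (y-v)^2"
    using abs_le_square_iff[of "y-v" "y-u"] by linarith
  moreover have "(y-v)^2 - (y-u)^2 = - ((v-u)*(2*y-u-v))" by (simp add: power2_eq_square algebra_simps)
  ultimately show ?thesis by linarith
qed

lemma absdist_eq: "\<bar>y - u\<bar> = \<bar>y - v\<bar> \<longleftrightarrow> (v - u) * (2*y - u - v) = (0::real)"
proof -
  have "(u - v) * (2*y - v - u) = - ((v - u) * (2*y - u - v))" by (simp add: algebra_simps)
  then show ?thesis using absdist[of y u v] absdist[of y v u] by linarith
qed

definition wit :: "nat \<Rightarrow> (nat \<Rightarrow> real) \<Rightarrow> nat list \<Rightarrow> real \<Rightarrow> bool" where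
  "wit m x p y \<longleftrightarrow> (\<forall>k. Suc k < m \<longrightarrow> \<bar>y - x (p ! k)\<bar> < \<bar>y - x (p ! Suc k)\<bar>)"

lemma RP_wit: "ranking_pattern m x = {p \<in> perms m. \<exists>y. wit m x p y}"
  by (simp add: ranking_pattern_def wit_def)

lemma perms_length: "p \<in> perms m \<Longrightarrow> length p = m"
  unfolding perms_def using distinct_card[of p] by auto

definition rel :: "nat list \<Rightarrow> nat \<Rightarrow> nat \<Rightarrow> bool" where
  "rel p a b \<longleftrightarrow> (\<exists>i j. i < j \<and> j < length p \<and> p ! i = a \<and> p ! j = b)"

lemma wit_rel:
  assumes p: "p \<in> perms m" and w: "wit m x p y" and ab: "a < m" "b < m" "a \<noteq> b"
  shows "(rel p a b \<longleftrightarrow> \<bar>y - x a\<bar> < \<bar>y - x b\<bar>) \<and> \<bar>y - x a\<bar> \<noteq> \<bar>y - x b\<bar>"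
proof -
  define P where "P = (\<lambda>u v. \<bar>y - x u\<bar> < \<bar>y - x v\<bar>)"
  have len: "length p = m" using perms_length[OF p] .
  have dp: "distinct p" "set p = {0..<m}" using p unfolding perms_def by auto
  have tr: "transp P" unfolding P_def transp_def by auto
  have sw: "sorted_wrt P p"
    using sorted_wrt_iff_nth_Suc_transp[OF tr, of p] w len unfolding wit_def P_def by auto
  have "a \<in> set p" "b \<in> set p" using dp ab by auto
  then obtain i j where i: "i < m" "p ! i = a" and j: "j < m" "p ! j = b" using len by (auto simp: in_set_conv_nth)
  have ij: "i \<noteq> j" using i j ab by auto
  show ?thesis
  proof (cases "i < j")
    case True
    then have "P a b" using sorted_wrt_nth_less[OF sw True] i j len by auto
    moreover have "rel p a b" unfolding rel_def using True i j len by auto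
    ultimately show ?thesis unfolding P_def by auto
  next
    case False
    then have ji: "j < i" using ij by auto
    then have "P b a" using sorted_wrt_nth_less[OF sw ji] i j len by auto
    moreover have "\<not> rel p a b"
    proof
      assume "rel p a b"
      then obtain i' j' where h: "i' < j'" "j' < length p" "p ! i' = a" "p ! j' = b" unfolding rel_def by auto
      have "i' = i" using h(1,2,3) i dp(1) len nth_eq_iff_index_eq[of p i' i] by auto
      moreover have "j' = j" using h(2,4) j dp(1) len nth_eq_iff_index_eq[of p j' j] by auto
      ultimately show False using h ji by auto
    qed
    ultimately show ?thesis unfolding P_def by auto
  qed
qed

lemma sort_perm:
  fixes f :: "nat \<Rightarrow> real"
  assumes "inj_on f {..<m}"
  shows "\<exists>p \<in> perms m. \<forall>i. Suc i < m \<longrightarrow> f (p ! i) < f (p ! Suc i)"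
proof -
  define p where "p = sort_key f [0..<m]"
  have sp: "set p = {0..<m}" "distinct p" "length p = m" unfolding p_def by auto
  have "sorted (map f p)" unfolding p_def by (rule sorted_sort_key)
  moreover have "distinct (map f p)" using sp assms
    by (simp add: distinct_map atLeast0LessThan)
  ultimately have "sorted_wrt (<) (map f p)" using strict_sorted_iff by blast
  then have "\<forall>i. Suc i < m \<longrightarrow> f (p ! i) < f (p ! Suc i)"
    using sorted_wrt_nth_less[of "(<)" "map f p"] sp by auto
  moreover have "p \<in> perms m" unfolding perms_def using sp by auto
  ultimately show ?thesis by blast
qed

lemma wit_exists:
  assumes "\<forall>a b. a < m \<longrightarrow> b < m \<longrightarrow> a \<noteq> b \<longrightarrow> \<bar>y - x a\<bar> \<noteq> \<bar>y - x b\<bar>"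
  shows "\<exists>p \<in> perms m. wit m x p y"
proof -
  have "inj_on (\<lambda>i. \<bar>y - x i\<bar>) {..<m}" using assms unfolding inj_on_def by auto
  from sort_perm[OF this] show ?thesis unfolding wit_def by auto
qed

definition neg :: "(nat \<Rightarrow> real) \<Rightarrow> nat \<Rightarrow> real" where "neg x = (\<lambda>i. - x i)"

lemma RP_neg: "ranking_pattern m (neg x) = ranking_pattern m x"
proof -
  have "wit m (neg x) p (-y) = wit m x p y" for p y
    unfolding wit_def neg_def by (simp add: abs_minus_commute)
  then have "(\<exists>y. wit m (neg x) p y) = (\<exists>y. wit m x p y)" for p
    by (metis minus_minus)
  then show ?thesis unfolding RP_wit by auto
qed

lemma sep_exists:
  fixes L U :: "real set"
  assumes "finite L" "finite U" "\<forall>l\<in>L. \<forall>u\<in>U. l < u"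
  shows "\<exists>w. (\<forall>l\<in>L. l < w) \<and> (\<forall>u\<in>U. w < u)"
proof (cases "L = {}")
  case True
  show ?thesis
  proof (cases "U = {}")
    case True then show ?thesis using \<open>L = {}\<close> by auto
  next
    case False
    have "\<forall>u\<in>U. Min U - 1 < u" using Min_le[OF assms(2)] by fastforce
    then show ?thesis using True by auto
  qed
next
  case LF: False
  show ?thesis
  proof (cases "U = {}")
    case True
    have "\<forall>l\<in>L. l < Max L + 1" using Max_ge[OF assms(1)] by fastforce
    then show ?thesis using True by auto
  next
    case False
    have "Max L < Min U" using assms LF False Max_in Min_in by blast
    have "\<forall>l\<in>L. l < (Max L + Min U)/2" using Max_ge[OF assms(1)] \<open>Max L < Min U\<close> by fastforce
    moreover have "\<forall>u\<in>U. (Max L + Min U)/2 < u" using Min_le[OF assms(2)] \<open>Max L < Min U\<close> by fastforce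
    ultimately show ?thesis by blast
  qed
qed

definition sveq :: "nat \<Rightarrow> (nat \<Rightarrow> real) \<Rightarrow> (nat \<Rightarrow> real) \<Rightarrow> bool" where
  "sveq m x x' \<longleftrightarrow> (\<forall>a b c d. a<m \<longrightarrow> b<m \<longrightarrow> c<m \<longrightarrow> d<m \<longrightarrow> (a=b \<longleftrightarrow> c=d) \<longrightarrow>
     sgn (x a + x b - x c - x d) = sgn (x' a + x' b - x' c - x' d))"

lemma sgn_eqD: "sgn (s::real) = sgn t \<Longrightarrow> (s < 0 \<longleftrightarrow> t < 0) \<and> (s > 0 \<longleftrightarrow> t > 0) \<and> (s = 0 \<longleftrightarrow> t = 0)"
  by (cases "s < 0"; cases "s > 0"; cases "t < 0"; cases "t > 0") (auto simp: sgn_if)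

lemma prodneg:
  fixes A B A' B' :: real
  assumes "A < 0 \<longleftrightarrow> A' < 0" "A > 0 \<longleftrightarrow> A' > 0" "B < 0 \<longleftrightarrow> B' < 0" "B > 0 \<longleftrightarrow> B' > 0" "A * B < 0"
  shows "A' * B' < 0"
  using assms by (auto simp: mult_less_0_iff)



lemma sgn_two: "sgn (t + t - s - s) = sgn (t - (s::real))"
proof -
  have e: "t + t - s - s = 2 * (t - s)" by simp
  have "sgn (t + t - s - s) = sgn 2 * sgn (t - s)" by (simp only: e sgn_mult)
  then show ?thesis by simp
qed

lemma sgn_eqI3: "((s::real) < 0 \<Longrightarrow> t < 0) \<Longrightarrow> (s > 0 \<Longrightarrow> t > 0) \<Longrightarrow> (s = 0 \<Longrightarrow> t = 0) \<Longrightarrow> sgn s = sgn t"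
  by (cases "s < 0"; cases "s > 0") (auto simp: sgn_if)

lemma wit_prod:
  assumes "p \<in> perms m" "wit m x p y" "a < m" "b < m" "a \<noteq> b"
  shows "(rel p a b \<longleftrightarrow> (x b - x a) * (2*y - x a - x b) < 0) \<and> (x b - x a) * (2*y - x a - x b) \<noteq> 0"
  using wit_rel[OF assms] absdist[of y "x a" "x b"] absdist_eq[of y "x a" "x b"] by blast

lemma RP_transfer:
  assumes m3: "m \<ge> 3" and x: "x \<in> GG m" and x': "x' \<in> GG m" and sv: "sveq m x x'"
  shows "ranking_pattern m x \<subseteq> ranking_pattern m x'"
proof
  fix p assume "p \<in> ranking_pattern m x"
  then obtain y where p: "p\<in>perms m" and w: "wit m x p y" by (auto simp: RP_wit)
  have nt: "x u + x v \<noteq> 2*y" if "u<m" "v<m" "u\<noteq>v" for u v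
  proof
    assume eq: "x u + x v = 2*y"
    have "(x v - x u) * (2*y - x u - x v) = 0" using eq by simp
    then show False using wit_prod[OF p w that] by blast
  qed
  define S where "S = {..<m} \<times> {..<m}"
  define L where "L = (\<lambda>(u,v). x' u + x' v) ` {(u,v)\<in>S. u\<noteq>v \<and> x u + x v < 2*y}"
  define U where "U = (\<lambda>(u,v). x' u + x' v) ` {(u,v)\<in>S. u\<noteq>v \<and> x u + x v > 2*y}"
  have fS: "finite S" unfolding S_def by auto
  have fin: "finite L" "finite U" unfolding L_def U_def
    by (intro finite_imageI; rule finite_subset[OF _ fS]; auto)+
  have sepLU: "\<forall>l\<in>L. \<forall>u\<in>U. l < u"
  proof (intro ballI)
    fix l u assume "l\<in>L" "u\<in>U"
    then obtain a b c d where ab: "a<m" "b<m" "a\<noteq>b" "x a + x b < 2*y" "l = x' a + x' b"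
      and cd: "c<m" "d<m" "c\<noteq>d" "x c + x d > 2*y" "u = x' c + x' d" unfolding L_def U_def S_def by auto
    have "sgn (x a + x b - x c - x d) = sgn (x' a + x' b - x' c - x' d)"
      using sv[unfolded sveq_def, rule_format, of a b c d] ab cd by blast
    moreover have "x a + x b - x c - x d < 0" using ab cd by linarith
    ultimately have "x' a + x' b - x' c - x' d < 0" using sgn_eqD by blast
    then show "l < u" using ab cd by linarith
  qed
  obtain w where wL: "\<forall>l\<in>L. l<w" and wU: "\<forall>u\<in>U. w<u" using sep_exists[OF fin sepLU] by blast
  have len: "length p = m" using perms_length[OF p] .
  have dp: "distinct p" "set p = {0..<m}" using p unfolding perms_def by auto
  have wit': "wit m x' p (w/2)" unfolding wit_def
  proof (intro allI impI)
    fix k assume k: "Suc k < m"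
    define a where "a = p!k"
    define b where "b = p!Suc k"
    have abm: "a<m" "b<m" using nth_mem[of k p] nth_mem[of "Suc k" p] k len dp unfolding a_def b_def by auto
    have ab: "a\<noteq>b" using dp(1) k len nth_eq_iff_index_eq[of p k "Suc k"] unfolding a_def b_def by auto
    have "\<bar>y - x a\<bar> < \<bar>y - x b\<bar>" using w k unfolding wit_def a_def b_def by auto
    then have P: "(x b - x a) * (2*y - x a - x b) < 0" using absdist by blast
    have sA: "sgn (x b - x a) = sgn (x' b - x' a)"
      using sv abm unfolding sveq_def by (metis sgn_two)
    have B: "(2*y - x a - x b < 0 \<longleftrightarrow> 2*(w/2) - x' a - x' b < 0) \<and> (2*y - x a - x b > 0 \<longleftrightarrow> 2*(w/2) - x' a - x' b > 0)"
    proof (cases "x a + x b < 2*y")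
      case True
      then have "x' a + x' b \<in> L" unfolding L_def S_def using abm ab by force
      then have "x' a + x' b < w" using wL by blast
      then show ?thesis using True by (intro conjI iffI; linarith)
    next
      case False
      then have F: "x a + x b > 2*y" using nt[OF abm ab] by linarith
      then have "x' a + x' b \<in> U" unfolding U_def S_def using abm ab by force
      then have "x' a + x' b > w" using wU by blast
      then show ?thesis using F by (intro conjI iffI; linarith)
    qed
    have "(x' b - x' a) * (2*(w/2) - x' a - x' b) < 0"
      using prodneg[of "x b - x a" "x' b - x' a" "2*y - x a - x b" "2*(w/2) - x' a - x' b"] sgn_eqD[OF sA] B P
      by blast
    then show "\<bar>w/2 - x' (p ! k)\<bar> < \<bar>w/2 - x' (p ! Suc k)\<bar>"
      using absdist unfolding a_def b_def by blast
  qed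
  show "p \<in> ranking_pattern m x'" using p wit' by (auto simp: RP_wit)
qed

lemma K1:
  fixes D E E' :: real
  assumes "D*E \<noteq> 0" "D*E' \<noteq> 0" "(D*E < 0) \<noteq> (D*E' < 0)" "E < E'"
  shows "D*E < 0 \<longleftrightarrow> D > 0"
  using assms by (auto simp: mult_less_0_iff)

lemma K2:
  fixes D D' E E' :: real
  assumes "E > 0" "D < 0 \<longleftrightarrow> D' < 0" "D > 0 \<longleftrightarrow> D' > 0" "D \<noteq> 0" "D*E < 0 \<longleftrightarrow> D'*E' < 0" "D'*E' \<noteq> 0"
  shows "E' > 0"
  using assms by (auto simp: mult_less_0_iff)

lemma K3:
  fixes D D' E E' :: real
  assumes "E < 0" "D < 0 \<longleftrightarrow> D' < 0" "D > 0 \<longleftrightarrow> D' > 0" "D \<noteq> 0" "D*E < 0 \<longleftrightarrow> D'*E' < 0" "D'*E' \<noteq> 0"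
  shows "E' < 0"
  using assms by (auto simp: mult_less_0_iff)



lemma orient:
  assumes m3: "m \<ge> 3" and x: "x \<in> GG m" and x': "x' \<in> GG m"
    and RP: "ranking_pattern m x = ranking_pattern m x'"
  shows "(\<forall>a b. a<m \<longrightarrow> b<m \<longrightarrow> (x a < x b \<longleftrightarrow> x' a < x' b)) \<or>
         (\<forall>a b. a<m \<longrightarrow> b<m \<longrightarrow> (x a < x b \<longleftrightarrow> x' b < x' a))"
proof -
  have gx: "generic m x" using x unfolding GG_def by auto
  define B where "B = (\<Sum>i<m. \<bar>x i\<bar>) + 1"
  have xb: "-B < x i \<and> x i < B" if "i<m" for i
  proof -
    have "\<bar>x i\<bar> \<le> (\<Sum>i<m. \<bar>x i\<bar>)"
      using member_le_sum[of i "{..<m}" "\<lambda>i. \<bar>x i\<bar>"] that by auto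
    then have "\<bar>x i\<bar> < B" unfolding B_def by linarith
    then show ?thesis by (simp add: abs_less_iff)
  qed
  have e0: "\<bar>(-B) - x a\<bar> = x a + B" if "a<m" for a
    using xb[OF that] by (simp add: abs_if)
  have e1: "\<bar>B - x a\<bar> = B - x a" if "a<m" for a
    using xb[OF that] by (simp add: abs_if)
  have dist: "x a \<noteq> x b" if "a<m" "b<m" "a\<noteq>b" for a b using gen_distinct[OF m3 gx that] .
  have "\<forall>a b. a<m \<longrightarrow> b<m \<longrightarrow> a\<noteq>b \<longrightarrow> \<bar>(-B) - x a\<bar> \<noteq> \<bar>(-B) - x b\<bar>" using e0 dist by auto
  then obtain p where p: "p\<in>perms m" "wit m x p (-B)" using wit_exists[of m "-B" x] by blast
  have "\<forall>a b. a<m \<longrightarrow> b<m \<longrightarrow> a\<noteq>b \<longrightarrow> \<bar>B - x a\<bar> \<noteq> \<bar>B - x b\<bar>" using e1 dist by auto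
  then obtain q where q: "q\<in>perms m" "wit m x q B" using wit_exists[of m "B" x] by blast
  have "p \<in> ranking_pattern m x'" "q \<in> ranking_pattern m x'"
    using p q RP by (auto simp: RP_wit)
  then obtain z z' where z: "wit m x' p z" and z': "wit m x' q z'" by (auto simp: RP_wit)
  have R1: "rel p a b \<longleftrightarrow> x a < x b" if "a<m" "b<m" "a\<noteq>b" for a b
    using wit_rel[OF p that] e0 that by auto
  have R2: "rel q a b \<longleftrightarrow> x b < x a" if "a<m" "b<m" "a\<noteq>b" for a b
    using wit_rel[OF q that] e1 that by auto
  have R3: "(x a < x b \<longleftrightarrow> (x' b - x' a) * (2*z - x' a - x' b) < 0) \<and> (x' b - x' a) * (2*z - x' a - x' b) \<noteq> 0"
    if "a<m" "b<m" "a\<noteq>b" for a b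
    using wit_prod[OF p(1) z that] R1[OF that] by blast
  have R4: "(x b < x a \<longleftrightarrow> (x' b - x' a) * (2*z' - x' a - x' b) < 0) \<and> (x' b - x' a) * (2*z' - x' a - x' b) \<noteq> 0"
    if "a<m" "b<m" "a\<noteq>b" for a b
    using wit_prod[OF q(1) z' that] R2[OF that] by blast
  have opp: "((x' b - x' a) * (2*z - x' a - x' b) < 0) \<noteq> ((x' b - x' a) * (2*z' - x' a - x' b) < 0)"
    if "a<m" "b<m" "a\<noteq>b" for a b
    using R3[OF that] R4[OF that] dist[OF that] by auto
  have m01: "0 < m" "1 < m" "(0::nat) \<noteq> 1" using m3 by auto
  consider "z < z'" | "z = z'" | "z' < z" by linarith
  then show ?thesis
  proof cases
    case 1
    have "x a < x b \<longleftrightarrow> x' a < x' b" if "a<m" "b<m" for a b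
    proof (cases "a = b")
      case False
      have "(x' b - x' a) * (2*z - x' a - x' b) < 0 \<longleftrightarrow> x' b - x' a > 0"
        using K1[of "x' b - x' a" "2*z - x' a - x' b" "2*z' - x' a - x' b"] R3[OF that False] R4[OF that False]
          opp[OF that False] 1 by linarith
      then show ?thesis using R3[OF that False] by linarith
    qed simp
    then show ?thesis by blast
  next
    case 2
    then show ?thesis using opp[OF m01] by simp
  next
    case 3
    have "x b < x a \<longleftrightarrow> x' a < x' b" if "a<m" "b<m" for a b
    proof (cases "a = b")
      case False
      have "(x' b - x' a) * (2*z' - x' a - x' b) < 0 \<longleftrightarrow> x' b - x' a > 0"
        using K1[of "x' b - x' a" "2*z' - x' a - x' b" "2*z - x' a - x' b"] R3[OF that False] R4[OF that False]
          opp[OF that False] 3 by linarith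
      then show ?thesis using R4[OF that False] by linarith
    qed simp
    then show ?thesis by blast
  qed
qed

lemma same_orient_sveq:
  assumes m3: "m \<ge> 3" and x: "x \<in> GG m" and x': "x' \<in> GG m"
    and RP: "ranking_pattern m x = ranking_pattern m x'"
    and ord: "\<forall>a b. a<m \<longrightarrow> b<m \<longrightarrow> (x a < x b \<longleftrightarrow> x' a < x' b)"
  shows "sveq m x x'"
proof -
  have gx: "generic m x" using x unfolding GG_def by auto
  have dist: "x a \<noteq> x b" if "a<m" "b<m" "a\<noteq>b" for a b using gen_distinct[OF m3 gx that] .
  have K: "x' a + x' b < x' c + x' d"
    if abcd: "a<m" "b<m" "c<m" "d<m" "a\<noteq>b" "c\<noteq>d" and lt: "x a + x b < x c + x d" for a b c d
  proof -
    define S where "S = (\<lambda>(u,v). x u + x v) ` ({..<m} \<times> {..<m})"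
    have "finite S" unfolding S_def by auto
    moreover have "infinite {x a + x b<..<x c + x d}" using lt by simp
    ultimately have "infinite ({x a + x b<..<x c + x d} - S)" using Diff_infinite_finite by blast
    then have "{x a + x b<..<x c + x d} - S \<noteq> {}" using infinite_imp_nonempty by blast
    then obtain w where w: "w \<in> {x a + x b<..<x c + x d}" "w \<notin> S" by blast
    define y where "y = w / 2"
    have nt: "\<bar>y - x u\<bar> \<noteq> \<bar>y - x v\<bar>" if "u<m" "v<m" "u\<noteq>v" for u v
    proof
      assume "\<bar>y - x u\<bar> = \<bar>y - x v\<bar>"
      then have "(x v - x u) * (2*y - x u - x v) = 0" using absdist_eq by blast
      moreover have "x v - x u \<noteq> 0" using dist[OF that] by auto
      moreover have "x u + x v \<in> S" unfolding S_def using that by force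
      then have "w \<noteq> x u + x v" using w(2) by auto
      then have "2*y - x u - x v \<noteq> 0" unfolding y_def by auto
      ultimately show False by simp
    qed
    obtain p where p: "p\<in>perms m" "wit m x p y" using wit_exists[of m y x] nt by blast
    then have "p \<in> ranking_pattern m x'" using RP by (auto simp: RP_wit)
    then obtain z where z: "wit m x' p z" by (auto simp: RP_wit)
    have o1: "x b - x a < 0 \<longleftrightarrow> x' b - x' a < 0" "x b - x a > 0 \<longleftrightarrow> x' b - x' a > 0"
      using ord abcd by auto
    have o2: "x d - x c < 0 \<longleftrightarrow> x' d - x' c < 0" "x d - x c > 0 \<longleftrightarrow> x' d - x' c > 0"
      using ord abcd by auto
    have "2*z - x' a - x' b > 0"
      using K2[of "2*y - x a - x b" "x b - x a" "x' b - x' a" "2*z - x' a - x' b"]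
        wit_prod[OF p abcd(1,2,5)] wit_prod[OF p(1) z abcd(1,2,5)] o1 dist[OF abcd(1,2,5)] w(1)
      unfolding y_def by auto
    moreover have "2*z - x' c - x' d < 0"
      using K3[of "2*y - x c - x d" "x d - x c" "x' d - x' c" "2*z - x' c - x' d"]
        wit_prod[OF p abcd(3,4,6)] wit_prod[OF p(1) z abcd(3,4,6)] o2 dist[OF abcd(3,4,6)] w(1)
      unfolding y_def by auto
    ultimately show ?thesis by linarith
  qed
  show ?thesis unfolding sveq_def
  proof (intro allI impI)
    fix a b c d assume h: "a<m" "b<m" "c<m" "d<m" "(a=b) = (c=d)"
    show "sgn (x a + x b - x c - x d) = sgn (x' a + x' b - x' c - x' d)"
    proof (cases "a = b")
      case True
      then have cd: "c = d" using h by auto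
      have "x a < x c \<longleftrightarrow> x' a < x' c" "x c < x a \<longleftrightarrow> x' c < x' a" using ord h by auto
      then have "sgn (x a + x a - x c - x c) = sgn (x' a + x' a - x' c - x' c)"
        by (intro sgn_eqI3) linarith+
      then show ?thesis using True cd by simp
    next
      case False
      then have cd: "c \<noteq> d" using h by auto
      show ?thesis
      proof (rule sgn_eqI3)
        assume "x a + x b - x c - x d < 0"
        then show "x' a + x' b - x' c - x' d < 0" using K[OF h(1-4) False cd] by linarith
      next
        assume "x a + x b - x c - x d > 0"
        then show "x' a + x' b - x' c - x' d > 0" using K[OF h(3,4,1,2) cd False] by linarith
      next
        assume "x a + x b - x c - x d = 0"
        then have "(a=c \<and> b=d) \<or> (a=d \<and> b=c)" using gen_zero[OF m3 gx h] by blast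
        then show "x' a + x' b - x' c - x' d = 0" by auto
      qed
    qed
  qed
qed

lemma RP_inj0:
  assumes m3: "m \<ge> 3" and x: "x \<in> GG m" and x': "x' \<in> GG m"
    and o: "x 0 < x 1" "x' 0 < x' 1"
    and RP: "ranking_pattern m x = ranking_pattern m x'"
  shows "sveq m x x'"
proof -
  have "\<not> (\<forall>a b. a<m \<longrightarrow> b<m \<longrightarrow> (x a < x b \<longleftrightarrow> x' b < x' a))"
  proof
    assume h: "\<forall>a b. a<m \<longrightarrow> b<m \<longrightarrow> (x a < x b \<longleftrightarrow> x' b < x' a)"
    have "(0::nat) < m" "(1::nat) < m" using m3 by auto
    then have "x 0 < x 1 \<longleftrightarrow> x' 1 < x' 0" using h by blast
    then show False using o by auto
  qed
  then show ?thesis using orient[OF m3 x x' RP] same_orient_sveq[OF m3 x x' RP] by blast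
qed



definition fq :: "nat \<times> nat \<times> nat \<times> nat \<Rightarrow> (nat \<Rightarrow> real) \<Rightarrow> real" where
  "fq q y = (case q of (a,b,c,d) \<Rightarrow> y a + y b - y c - y d)"

definition qs :: "nat \<Rightarrow> (nat \<times> nat \<times> nat \<times> nat) list" where
  "qs m = filter (\<lambda>(a,b,c,d). (a=b) = (c=d))
     (List.product [0..<m] (List.product [0..<m] (List.product [0..<m] [0..<m])))"

definition sv :: "nat \<Rightarrow> (nat \<Rightarrow> real) \<Rightarrow> real list" where
  "sv m y = map (\<lambda>q. sgn (fq q y)) (qs m)"

lemma set_qs: "set (qs m) = {(a,b,c,d). a<m \<and> b<m \<and> c<m \<and> d<m \<and> (a=b) = (c=d)}"
  unfolding qs_def by auto

lemma sv_eq: "sv m x = sv m y \<longleftrightarrow> sveq m x y"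
  unfolding sv_def sveq_def map_eq_conv set_qs fq_def by auto

lemma sveq_sym: "sveq m x y \<longleftrightarrow> sveq m y x"
  unfolding sveq_def by metis

lemma sv_fin: "finite (sv m ` A)"
proof (rule finite_subset)
  show "sv m ` A \<subseteq> {l. set l \<subseteq> {-1,0,1} \<and> length l = length (qs m)}"
    unfolding sv_def by (auto simp: sgn_if)
  show "finite {l. set l \<subseteq> {-1,0,1::real} \<and> length l = length (qs m)}"
    by (rule finite_lists_length_eq) auto
qed

lemma card_eq_kernel:
  assumes "\<forall>x\<in>A. \<forall>y\<in>A. f x = f y \<longleftrightarrow> g x = g y"
  shows "card (f ` A) = card (g ` A)"
proof -
  define h where "h v = g (inv_into A f v)" for v
  have hf: "h (f x) = g x" if "x \<in> A" for x
  proof -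
    have "inv_into A f (f x) \<in> A" "f (inv_into A f (f x)) = f x"
      using that by (auto intro: inv_into_into f_inv_into_f)
    then show ?thesis unfolding h_def using assms that by blast
  qed
  have "g ` A = h ` (f ` A)" using hf by (auto simp: image_image)
  moreover have "inj_on h (f ` A)"
    unfolding inj_on_def using hf assms by auto
  ultimately show ?thesis by (simp add: card_image)
qed

lemma GG_eq:
  assumes m3: "m \<ge> 3"
  shows "Rm m - \<Union>(mid_hyperplanes m) = GG m"
proof (rule set_eqI)
  fix x
  show "x \<in> Rm m - \<Union>(mid_hyperplanes m) \<longleftrightarrow> x \<in> GG m"
  proof (cases "x \<in> Rm m")
    case False then show ?thesis unfolding GG_def by auto
  next
    case xR: True
    have H1: "x \<in> \<Union>(mid_hyperplanes m)" if "x a = x b" "a<b" "b<m" for a b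
    proof -
      have "{x \<in> Rm m. x a = x b} \<in> mid_hyperplanes m" unfolding mid_hyperplanes_def using that by blast
      then show ?thesis using xR that by blast
    qed
    have H1': "x \<in> \<Union>(mid_hyperplanes m)" if "x a = x b" "a\<noteq>b" "a<m" "b<m" for a b
    proof (cases "a < b")
      case True then show ?thesis using H1 that by blast
    next
      case False then show ?thesis using H1[of b a] that by auto
    qed
    have H2: "x \<in> \<Union>(mid_hyperplanes m)"
      if "x i + x j = x k + x l" "i<j" "j<m" "i<k" "k<l" "l<m" "i\<noteq>k" "i\<noteq>l" "j\<noteq>k" "j\<noteq>l" for i j k l
    proof -
      have "{x \<in> Rm m. x i + x j = x k + x l} \<in> mid_hyperplanes m"
        unfolding mid_hyperplanes_def using that(2-) by blast
      then show ?thesis using xR that(1) by blast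
    qed
    have "generic m x \<longleftrightarrow> x \<notin> \<Union>(mid_hyperplanes m)"
    proof
      assume g: "generic m x"
      show "x \<notin> \<Union>(mid_hyperplanes m)"
      proof
        assume "x \<in> \<Union>(mid_hyperplanes m)"
        then obtain H where "H \<in> mid_hyperplanes m" "x \<in> H" by blast
        then consider (a) i j where "i<j" "j<m" "x i = x j"
          | (b) i j k l where "i < j \<and> j < m \<and> i < k \<and> k < l \<and> l < m \<and>
              i \<noteq> k \<and> i \<noteq> l \<and> j \<noteq> k \<and> j \<noteq> l" "x i + x j = x k + x l"
          unfolding mid_hyperplanes_def by blast
        then show False
        proof cases
          case a then show False using gen_distinct[OF m3 g, of i j] by auto
        next
          case b
          then have "i < j \<and> j < m \<and> k < l \<and> l < m \<and> (i, j) \<noteq> (k, l)" by auto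
          then have "(x i + x j)/2 \<noteq> (x k + x l)/2" using g unfolding generic_def by blast
          then show False using b by auto
        qed
      qed
    next
      assume nh: "x \<notin> \<Union>(mid_hyperplanes m)"
      show "generic m x" unfolding generic_def
      proof (intro allI impI)
        fix i j k l assume h: "i < j \<and> j < m \<and> k < l \<and> l < m \<and> (i, j) \<noteq> (k, l)"
        show "(x i + x j) / 2 \<noteq> (x k + x l) / 2"
        proof
          assume "(x i + x j) / 2 = (x k + x l) / 2"
          then have e: "x i + x j = x k + x l" by simp
          consider "i = k" | "i = l" | "j = k" | "j = l" | "i \<noteq> k \<and> i \<noteq> l \<and> j \<noteq> k \<and> j \<noteq> l" by blast
          then show False
          proof cases
            case 1 then show False using H1'[of j l] e h nh by auto
          next
            case 2 then show False using H1'[of j k] e h nh by auto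
          next
            case 3 then show False using H1'[of i l] e h nh by auto
          next
            case 4 then show False using H1'[of i k] e h nh by auto
          next
            case 5
            show False
            proof (cases "i < k")
              case True then show False using H2[of i j k l] e h 5 nh by auto
            next
              case False then show False using H2[of k l i j] e h 5 nh by auto
            qed
          qed
        qed
      qed
    qed
    then show ?thesis unfolding GG_def using xR by auto
  qed
qed

lemma sveq_generic:
  assumes m3: "m \<ge> 3" and x: "x \<in> GG m" and y: "y \<in> Rm m" and s: "sveq m x y"
  shows "y \<in> GG m"
proof -
  have gx: "generic m x" using x unfolding GG_def by auto
  have "generic m y" unfolding genchar
  proof (intro allI impI)
    fix a b c d assume h: "a<m" "b<m" "c<m" "d<m" "a\<noteq>b" "c\<noteq>d" "y a + y b = y c + y d"
    have "(a=b) = (c=d)" using h by auto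
    then have "sgn (x a + x b - x c - x d) = sgn (y a + y b - y c - y d)" using s h unfolding sveq_def by blast
    then have "x a + x b - x c - x d = 0" using h(7) by (simp add: sgn_eq_0_iff)
    then show "(a=c \<and> b=d) \<or> (a=d \<and> b=c)" using gen_zero[OF m3 gx h(1-4)] h by auto
  qed
  then show ?thesis using y unfolding GG_def by auto
qed

lemma convsgn:
  fixes A B t :: real
  assumes "sgn A = sgn B" "0 \<le> t" "t \<le> 1"
  shows "sgn ((1-t)*A + t*B) = sgn A"
proof -
  have c: "(A < 0 \<longleftrightarrow> B < 0) \<and> (A > 0 \<longleftrightarrow> B > 0) \<and> (A = 0 \<longleftrightarrow> B = 0)" using sgn_eqD[OF assms(1)] .
  show ?thesis
  proof (rule sgn_eqI3[symmetric])
    assume "A < 0"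
    then have "B < 0" using c by auto
    have "(1-t)*A \<le> 0" using \<open>A<0\<close> assms by (simp add: mult_nonneg_nonpos)
    moreover have "t*B \<le> 0" using \<open>B<0\<close> assms by (simp add: mult_nonneg_nonpos)
    moreover have "(1-t)*A < 0 \<or> t*B < 0"
      using \<open>A<0\<close> \<open>B<0\<close> assms by (cases "t < 1") (auto simp: mult_pos_neg)
    ultimately show "(1-t)*A + t*B < 0" by linarith
  next
    assume "A > 0"
    then have "B > 0" using c by auto
    have "(1-t)*A \<ge> 0" using \<open>A>0\<close> assms by simp
    moreover have "t*B \<ge> 0" using \<open>B>0\<close> assms by simp
    moreover have "(1-t)*A > 0 \<or> t*B > 0"
      using \<open>A>0\<close> \<open>B>0\<close> assms by (cases "t < 1") auto
    ultimately show "(1-t)*A + t*B > 0" by linarith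
  next
    assume "A = 0"
    then show "(1-t)*A + t*B = 0" using c by auto
  qed
qed

lemma cls_connected:
  assumes m3: "m \<ge> 3" and x: "x \<in> GG m"
  shows "connected {y \<in> GG m. sveq m x y}"
proof (rule path_connected_imp_connected, unfold path_connected_def, intro ballI)
  fix x1 x2 assume x1: "x1 \<in> {y \<in> GG m. sveq m x y}" and x2: "x2 \<in> {y \<in> GG m. sveq m x y}"
  define g where "g t = (\<lambda>i. (1-t) * x1 i + t * x2 i)" for t :: real
  have cont: "continuous_on {0..1} g" unfolding g_def
    by (intro continuous_on_coordinatewise_then_product continuous_intros)
  have img: "g t \<in> {y \<in> GG m. sveq m x y}" if t: "t \<in> {0..1}" for t
  proof -
    have gR: "g t \<in> Rm m" using x1 x2 unfolding g_def GG_def Rm_def by auto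
    have "sveq m x (g t)" unfolding sveq_def
    proof (intro allI impI)
      fix a b c d assume h: "a<m" "b<m" "c<m" "d<m" "(a=b) = (c=d)"
      have s1: "sgn (x a + x b - x c - x d) = sgn (x1 a + x1 b - x1 c - x1 d)"
        using x1 h unfolding sveq_def by blast
      have s2: "sgn (x a + x b - x c - x d) = sgn (x2 a + x2 b - x2 c - x2 d)"
        using x2 h unfolding sveq_def by blast
      have e: "g t a + g t b - g t c - g t d = (1-t)*(x1 a + x1 b - x1 c - x1 d) + t*(x2 a + x2 b - x2 c - x2 d)"
        unfolding g_def by (simp add: algebra_simps)
      show "sgn (x a + x b - x c - x d) = sgn (g t a + g t b - g t c - g t d)"
        unfolding e using convsgn[of "x1 a + x1 b - x1 c - x1 d" "x2 a + x2 b - x2 c - x2 d" t] s1 s2 t by simp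
    qed
    then show ?thesis using sveq_generic[OF m3 x gR] by auto
  qed
  show "\<exists>g. path g \<and> path_image g \<subseteq> {y \<in> GG m. sveq m x y} \<and> pathstart g = x1 \<and> pathfinish g = x2"
    using cont img unfolding path_def path_image_def pathstart_def pathfinish_def
    by (intro exI[of _ g]) (auto simp: g_def)
qed



lemma sveq_refl: "sveq m x x" unfolding sveq_def by simp

lemma sgnprod:
  fixes A B :: real
  assumes "A = 0 \<longleftrightarrow> B = 0"
  shows "(sgn A = sgn B \<longleftrightarrow> A = 0 \<or> 0 < A*B) \<and> (sgn A = sgn B \<longleftrightarrow> 0 \<le> A*B)"
  using assms by (auto simp: sgn_if zero_less_mult_iff zero_le_mult_iff)

lemma sveq_fq: "sveq m x y \<longleftrightarrow> (\<forall>q\<in>set (qs m). sgn (fq q x) = sgn (fq q y))"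
  unfolding sveq_def set_qs fq_def by auto

lemma fq_zero:
  assumes m3: "m \<ge> 3" and x: "x \<in> GG m" and y: "y \<in> GG m" and q: "q \<in> set (qs m)"
  shows "fq q x = 0 \<longleftrightarrow> fq q y = 0"
proof -
  obtain a b c d where qq: "q = (a,b,c,d)" by (cases q) auto
  have h: "a<m" "b<m" "c<m" "d<m" "(a=b) = (c=d)" using q unfolding qq set_qs by auto
  have gx: "generic m x" and gy: "generic m y" using x y unfolding GG_def by auto
  show ?thesis unfolding qq fq_def using gen_zero[OF m3 gx h] gen_zero[OF m3 gy h] by simp
qed

lemma cont_fq: "continuous_on UNIV (fq q)"
proof -
  obtain a b c d where qq: "q = (a,b,c,d)" by (cases q) auto
  have "fq q = (\<lambda>y. y a + y b - y c - y d)" unfolding qq fq_def by auto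
  then show ?thesis by (auto intro!: continuous_intros continuous_on_product_coordinates)
qed

lemma comp:
  assumes m3: "m \<ge> 3" and x: "x \<in> GG m"
  shows "connected_component_set (GG m) x = {y\<in>GG m. sveq m x y}"
proof
  show "{y\<in>GG m. sveq m x y} \<subseteq> connected_component_set (GG m) x"
    by (rule connected_component_maximal) (use x sveq_refl cls_connected[OF m3 x] in auto)
next
  define K where "K = connected_component_set (GG m) x"
  have KG: "K \<subseteq> GG m" unfolding K_def by (rule connected_component_subset)
  have xK: "x \<in> K" unfolding K_def using x by (simp add: connected_component_refl)
  define Q where "Q = set (qs m)"
  have fQ: "finite Q" unfolding Q_def by simp
  define Opn where "Opn = (\<Inter>q\<in>Q. {y. fq q x = 0 \<or> 0 < fq q x * fq q y})"
  define Cls where "Cls = (\<Inter>q\<in>Q. {y. 0 \<le> fq q x * fq q y})"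
  have oO: "open Opn" unfolding Opn_def
  proof (rule open_INT[OF fQ], rule ballI)
    fix q assume "q \<in> Q"
    show "open {y. fq q x = 0 \<or> 0 < fq q x * fq q y}"
    proof (cases "fq q x = 0")
      case True then show ?thesis by simp
    next
      case False
      have "open {y. (\<lambda>y. 0) y < (\<lambda>y. fq q x * fq q y) y}"
        by (rule open_Collect_less) (auto intro!: continuous_intros cont_fq)
      then show ?thesis using False by simp
    qed
  qed
  have cC: "closed Cls" unfolding Cls_def
  proof (rule closed_INT, rule ballI)
    fix q assume "q \<in> Q"
    have "closed {y. (\<lambda>y. 0) y \<le> (\<lambda>y. fq q x * fq q y) y}"
      by (rule closed_Collect_le) (auto intro!: continuous_intros cont_fq)
    then show "closed {y. 0 \<le> fq q x * fq q y}" by simp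
  qed
  have key: "(y \<in> Opn \<longleftrightarrow> sveq m x y) \<and> (y \<in> Cls \<longleftrightarrow> sveq m x y)" if y: "y \<in> GG m" for y
  proof -
    have "\<forall>q\<in>Q. (sgn (fq q x) = sgn (fq q y) \<longleftrightarrow> fq q x = 0 \<or> 0 < fq q x * fq q y) \<and>
                 (sgn (fq q x) = sgn (fq q y) \<longleftrightarrow> 0 \<le> fq q x * fq q y)"
      using sgnprod fq_zero[OF m3 x y] unfolding Q_def by blast
    then show ?thesis unfolding Opn_def Cls_def sveq_fq Q_def[symmetric] by auto
  qed
  have TT: "K \<inter> Opn = K \<inter> Cls" using key KG by blast
  have op: "openin (top_of_set K) (K \<inter> Opn)" using oO by (rule openin_open_Int)
  have cl: "closedin (top_of_set K) (K \<inter> Opn)" unfolding TT using cC by (rule closedin_closed_Int)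
  have "connected K" unfolding K_def by (rule connected_connected_component)
  then have "K \<inter> Opn = {} \<or> K \<inter> Opn = K" using op cl unfolding connected_clopen by blast
  moreover have "x \<in> Opn" using key[OF x] sveq_refl by blast
  ultimately have "K \<subseteq> Opn" using xK by blast
  then show "connected_component_set (GG m) x \<subseteq> {y\<in>GG m. sveq m x y}"
    using key KG unfolding K_def by blast
qed

lemma card_chambers:
  assumes m3: "m \<ge> 3"
  shows "card (chambers m) = card (sv m ` GG m)"
proof -
  have "chambers m = (\<lambda>x. {y\<in>GG m. sveq m x y}) ` GG m"
    unfolding chambers_def Let_def GG_eq[OF m3] using comp[OF m3] by auto
  moreover have "card ((\<lambda>x. {y\<in>GG m. sveq m x y}) ` GG m) = card (sv m ` GG m)"
  proof (rule card_eq_kernel, intro ballI)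
    fix x x' assume "x \<in> GG m" "x' \<in> GG m"
    have e: "{y\<in>GG m. sveq m x y} = {y\<in>GG m. sv m x = sv m y}" for x
      by (simp add: sv_eq)
    show "({y\<in>GG m. sveq m x y} = {y\<in>GG m. sveq m x' y}) = (sv m x = sv m x')"
      unfolding e
    proof
      assume "{y\<in>GG m. sv m x = sv m y} = {y\<in>GG m. sv m x' = sv m y}"
      moreover have "x' \<in> {y\<in>GG m. sv m x' = sv m y}" using \<open>x' \<in> GG m\<close> by simp
      ultimately show "sv m x = sv m x'" by blast
    qed simp
  qed
  ultimately show ?thesis by simp
qed



lemma neg_GG: "x \<in> GG m \<Longrightarrow> neg x \<in> GG m"
proof -
  assume x: "x \<in> GG m"
  have gx: "generic m x" using x unfolding GG_def by auto
  have "generic m (neg x)" unfolding genchar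
  proof (intro allI impI)
    fix a b c d assume h: "a<m" "b<m" "c<m" "d<m" "a\<noteq>b" "c\<noteq>d" "neg x a + neg x b = neg x c + neg x d"
    then have "x a + x b = x c + x d" unfolding neg_def by linarith
    then show "(a=c \<and> b=d) \<or> (a=d \<and> b=c)" using gx[unfolded genchar] h by blast
  qed
  then show ?thesis using x unfolding GG_def Rm_def neg_def by auto
qed

lemma neg_neg: "neg (neg x) = x" unfolding neg_def by simp

lemma fq_neg: "fq q (neg x) = - fq q x"
  by (cases q) (simp add: fq_def neg_def)

lemma sv_neg: "sv m (neg x) = sv m (neg y) \<longleftrightarrow> sv m x = sv m y"
  unfolding sv_def map_eq_conv fq_neg sgn_minus by simp

definition G0 :: "nat \<Rightarrow> (nat \<Rightarrow> real) set" where "G0 m = {x \<in> GG m. x 0 < x 1}"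
definition G1 :: "nat \<Rightarrow> (nat \<Rightarrow> real) set" where "G1 m = {x \<in> GG m. x 1 < x 0}"
definition Gs :: "nat \<Rightarrow> (nat \<Rightarrow> real) set" where
  "Gs m = {x \<in> GG m. \<forall>i. Suc i < m \<longrightarrow> x i < x (Suc i)}"

lemma GG_split:
  assumes m3: "m \<ge> 3"
  shows "GG m = G0 m \<union> G1 m"
proof -
  have "x 0 \<noteq> x 1" if "x \<in> GG m" for x
    using gen_distinct[OF m3, of x 0 1] that m3 unfolding GG_def by auto
  then show ?thesis unfolding G0_def G1_def by (auto simp: linorder_neq_iff)
qed

lemma G1_neg: "G1 m = neg ` G0 m"
proof
  show "neg ` G0 m \<subseteq> G1 m" unfolding G0_def G1_def using neg_GG by (auto simp: neg_def)
  show "G1 m \<subseteq> neg ` G0 m"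
  proof
    fix y assume y: "y \<in> G1 m"
    then have "neg y \<in> G0 m" unfolding G0_def G1_def using neg_GG by (auto simp: neg_def)
    then show "y \<in> neg ` G0 m" by (rule rev_image_eqI) (simp add: neg_neg)
  qed
qed

lemma count2:
  assumes m3: "m \<ge> 3"
  shows "card (sv m ` GG m) = 2 * card (sv m ` G0 m)"
proof -
  have m01: "(0::nat) < m" "(1::nat) < m" using m3 by auto
  have disj: "sv m ` G0 m \<inter> sv m ` G1 m = {}"
  proof (rule ccontr)
    assume "sv m ` G0 m \<inter> sv m ` G1 m \<noteq> {}"
    then obtain x y where x: "x \<in> G0 m" and y: "y \<in> G1 m" and e: "sv m x = sv m y" by auto
    have "sgn (x 0 + x 0 - x 1 - x 1) = sgn (y 0 + y 0 - y 1 - y 1)"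
      using e[unfolded sv_eq sveq_def] m01 by blast
    moreover have "x 0 + x 0 - x 1 - x 1 < 0" "y 0 + y 0 - y 1 - y 1 > 0"
      using x y unfolding G0_def G1_def by auto
    ultimately show False by simp
  qed
  have "card (sv m ` G1 m) = card ((\<lambda>x. sv m (neg x)) ` G0 m)"
    unfolding G1_neg image_image ..
  also have "\<dots> = card (sv m ` G0 m)"
    using card_eq_kernel[of "G0 m" "\<lambda>x. sv m (neg x)" "sv m"] sv_neg by simp
  finally have c1: "card (sv m ` G1 m) = card (sv m ` G0 m)" .
  have "card (sv m ` GG m) = card (sv m ` G0 m \<union> sv m ` G1 m)"
    unfolding GG_split[OF m3] image_Un ..
  also have "\<dots> = card (sv m ` G0 m) + card (sv m ` G1 m)"
    by (rule card_Un_disjoint[OF sv_fin sv_fin disj])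
  finally show ?thesis using c1 by simp
qed

lemma RP_sv_iff:
  assumes m3: "m \<ge> 3" and x: "x \<in> G0 m" and y: "y \<in> G0 m"
  shows "ranking_pattern m x = ranking_pattern m y \<longleftrightarrow> sv m x = sv m y"
proof
  have xg: "x \<in> GG m" "x 0 < x 1" and yg: "y \<in> GG m" "y 0 < y 1" using x y unfolding G0_def by auto
  show "ranking_pattern m x = ranking_pattern m y \<Longrightarrow> sv m x = sv m y"
    using RP_inj0[OF m3 xg(1) yg(1) xg(2) yg(2)] by (simp add: sv_eq)
  show "sv m x = sv m y \<Longrightarrow> ranking_pattern m x = ranking_pattern m y"
    using RP_transfer[OF m3 xg(1) yg(1)] RP_transfer[OF m3 yg(1) xg(1)] sveq_sym
    by (simp add: sv_eq)
qed

lemma r_count: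
  assumes m3: "m \<ge> 3"
  shows "r m = card (sv m ` G0 m)"
proof -
  have "r m = card (ranking_pattern m ` GG m)"
    unfolding r_def GG_def by (rule arg_cong[where f=card]) auto
  also have "ranking_pattern m ` GG m = ranking_pattern m ` G0 m"
  proof
    show "ranking_pattern m ` G0 m \<subseteq> ranking_pattern m ` GG m" unfolding G0_def by auto
    show "ranking_pattern m ` GG m \<subseteq> ranking_pattern m ` G0 m"
    proof
      fix R assume "R \<in> ranking_pattern m ` GG m"
      then obtain x where x: "x \<in> GG m" "R = ranking_pattern m x" by auto
      show "R \<in> ranking_pattern m ` G0 m"
      proof (cases "x \<in> G0 m")
        case True then show ?thesis using x by auto
      next
        case False
        then have "x \<in> G1 m" using x GG_split[OF m3] by auto
        then have "neg x \<in> G0 m" unfolding G0_def G1_def using neg_GG by (auto simp: neg_def)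
        then show ?thesis by (rule rev_image_eqI) (simp add: x(2) RP_neg)
      qed
    qed
  qed
  also have "card (ranking_pattern m ` G0 m) = card (sv m ` G0 m)"
    by (rule card_eq_kernel) (use RP_sv_iff[OF m3] in blast)
  finally show ?thesis .
qed

lemma r0_count:
  assumes m3: "m \<ge> 3"
  shows "r0 m = card (sv m ` Gs m)"
proof -
  have "r0 m = card (ranking_pattern m ` Gs m)"
    unfolding r0_def Gs_def GG_def by (rule arg_cong[where f=card]) auto
  also have "\<dots> = card (sv m ` Gs m)"
  proof (rule card_eq_kernel, intro ballI)
    fix x y assume "x \<in> Gs m" "y \<in> Gs m"
    then have "x \<in> G0 m" "y \<in> G0 m" using m3 unfolding Gs_def G0_def by auto
    then show "(ranking_pattern m x = ranking_pattern m y) = (sv m x = sv m y)"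
      using RP_sv_iff[OF m3] by blast
  qed
  finally show ?thesis .
qed



definition act :: "(nat \<Rightarrow> nat) \<Rightarrow> (nat \<Rightarrow> real) \<Rightarrow> nat \<Rightarrow> real" where
  "act \<pi> x = (\<lambda>i. x (\<pi> i))"

lemma act_GG:
  assumes p: "\<pi> permutes {..<m}" and x: "x \<in> GG m"
  shows "act \<pi> x \<in> GG m"
proof -
  have gx: "generic m x" using x unfolding GG_def by auto
  have pm: "\<pi> i < m \<longleftrightarrow> i < m" for i using permutes_in_image[OF p, of i] by simp
  have pi: "\<pi> i = \<pi> j \<longleftrightarrow> i = j" for i j using permutes_inj[OF p] by (simp add: inj_eq)
  have "generic m (act \<pi> x)" unfolding genchar
  proof (intro allI impI)
    fix a b c d assume h: "a<m" "b<m" "c<m" "d<m" "a\<noteq>b" "c\<noteq>d" "act \<pi> x a + act \<pi> x b = act \<pi> x c + act \<pi> x d"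
    then have "(\<pi> a = \<pi> c \<and> \<pi> b = \<pi> d) \<or> (\<pi> a = \<pi> d \<and> \<pi> b = \<pi> c)"
      using gx[unfolded genchar, rule_format, of "\<pi> a" "\<pi> b" "\<pi> c" "\<pi> d"] pm pi unfolding act_def by blast
    then show "(a=c \<and> b=d) \<or> (a=d \<and> b=c)" using pi by blast
  qed
  moreover have "act \<pi> x \<in> Rm m"
    using x permutes_not_in[OF p] unfolding GG_def Rm_def act_def by auto
  ultimately show ?thesis unfolding GG_def by auto
qed

lemma sv_act:
  assumes p: "\<pi> permutes {..<m}"
  shows "sv m (act \<pi> x) = sv m (act \<pi> y) \<longleftrightarrow> sv m x = sv m y"
proof -
  have pm: "\<pi> i < m \<longleftrightarrow> i < m" for i using permutes_in_image[OF p, of i] by simp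
  have pi: "\<pi> i = \<pi> j \<longleftrightarrow> i = j" for i j using permutes_inj[OF p] by (simp add: inj_eq)
  have ip: "\<pi> (inv \<pi> i) = i" for i using permutes_inverses(1)[OF p] .
  have ipm: "inv \<pi> i < m \<longleftrightarrow> i < m" for i using pm[of "inv \<pi> i"] ip[of i] by simp
  have "sveq m (act \<pi> x) (act \<pi> y) \<longleftrightarrow> sveq m x y"
  proof
    assume s: "sveq m (act \<pi> x) (act \<pi> y)"
    show "sveq m x y" unfolding sveq_def
    proof (intro allI impI)
      fix a b c d assume h: "a<m" "b<m" "c<m" "d<m" "(a=b) = (c=d)"
      have iinj: "inv \<pi> i = inv \<pi> j \<longleftrightarrow> i = j" for i j
      proof
        assume "inv \<pi> i = inv \<pi> j"
        then have "\<pi> (inv \<pi> i) = \<pi> (inv \<pi> j)" by simp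
        then show "i = j" by (simp add: ip)
      qed simp
      have "(inv \<pi> a = inv \<pi> b) = (inv \<pi> c = inv \<pi> d)" using h(5) iinj by simp
      then have "sgn (act \<pi> x (inv \<pi> a) + act \<pi> x (inv \<pi> b) - act \<pi> x (inv \<pi> c) - act \<pi> x (inv \<pi> d)) =
                 sgn (act \<pi> y (inv \<pi> a) + act \<pi> y (inv \<pi> b) - act \<pi> y (inv \<pi> c) - act \<pi> y (inv \<pi> d))"
        using s[unfolded sveq_def] h ipm by blast
      then show "sgn (x a + x b - x c - x d) = sgn (y a + y b - y c - y d)" unfolding act_def ip .
    qed
  next
    assume s: "sveq m x y"
    show "sveq m (act \<pi> x) (act \<pi> y)" unfolding sveq_def act_def
    proof (intro allI impI)
      fix a b c d assume h: "a<m" "b<m" "c<m" "d<m" "(a=b) = (c=d)"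
      have "(\<pi> a = \<pi> b) = (\<pi> c = \<pi> d)" using h(5) pi by simp
      then show "sgn (x (\<pi> a) + x (\<pi> b) - x (\<pi> c) - x (\<pi> d)) = sgn (y (\<pi> a) + y (\<pi> b) - y (\<pi> c) - y (\<pi> d))"
        using s[unfolded sveq_def] h pm by blast
    qed
  qed
  then show ?thesis by (simp add: sv_eq)
qed

lemma sorted_less:
  fixes x :: "nat \<Rightarrow> real"
  assumes s: "\<forall>i. Suc i < m \<longrightarrow> x i < x (Suc i)" and uv: "u < v" "v < m"
  shows "x u < x v"
  using uv
proof (induction v)
  case 0 then show ?case by simp
next
  case (Suc v)
  show ?case
  proof (cases "u = v")
    case True then show ?thesis using s Suc by simp
  next
    case False
    then have "x u < x v" using Suc by simp
    also have "x v < x (Suc v)" using s Suc by simp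
    finally show ?thesis .
  qed
qed

lemma sorted_iff:
  fixes x :: "nat \<Rightarrow> real"
  assumes s: "\<forall>i. Suc i < m \<longrightarrow> x i < x (Suc i)" and uv: "u < m" "v < m"
  shows "x u < x v \<longleftrightarrow> u < v"
proof -
  consider "u < v" | "u = v" | "v < u" by linarith
  then show ?thesis
  proof cases
    case 1 then show ?thesis using sorted_less[OF s 1 uv(2)] by simp
  next
    case 2 then show ?thesis by simp
  next
    case 3 then show ?thesis using sorted_less[OF s 3 uv(1)] by simp
  qed
qed

lemma perm_rank:
  assumes p: "\<pi> permutes {..<m}" and a: "a < m"
  shows "\<pi> a = card {b \<in> {..<m}. \<pi> b < \<pi> a}"
proof -
  have im: "\<pi> ` {b \<in> {..<m}. \<pi> b < \<pi> a} = {..<\<pi> a}"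
  proof
    show "\<pi> ` {b \<in> {..<m}. \<pi> b < \<pi> a} \<subseteq> {..<\<pi> a}" by auto
    show "{..<\<pi> a} \<subseteq> \<pi> ` {b \<in> {..<m}. \<pi> b < \<pi> a}"
    proof
      fix c assume c: "c \<in> {..<\<pi> a}"
      have "\<pi> a < m" using permutes_in_image[OF p, of a] a by simp
      then have "c \<in> \<pi> ` {..<m}" using c permutes_image[OF p] by auto
      then obtain b where "b < m" "c = \<pi> b" by auto
      then show "c \<in> \<pi> ` {b \<in> {..<m}. \<pi> b < \<pi> a}" using c by auto
    qed
  qed
  have inj: "inj_on \<pi> {b \<in> {..<m}. \<pi> b < \<pi> a}" using permutes_inj_on[OF p] .
  have "card {..<\<pi> a} = card {b \<in> {..<m}. \<pi> b < \<pi> a}" using card_image[OF inj] unfolding im .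
  then show ?thesis by simp
qed

lemma perm_order_eq:
  fixes \<pi> \<pi>' :: "nat \<Rightarrow> nat"
  assumes p: "\<pi> permutes {..<m}" and p': "\<pi>' permutes {..<m}"
    and o: "\<forall>a b. a<m \<longrightarrow> b<m \<longrightarrow> (\<pi> a < \<pi> b \<longleftrightarrow> \<pi>' a < \<pi>' b)"
  shows "\<pi> = \<pi>'"
proof
  fix a show "\<pi> a = \<pi>' a"
  proof (cases "a < m")
    case True
    have "{b \<in> {..<m}. \<pi> b < \<pi> a} = {b \<in> {..<m}. \<pi>' b < \<pi>' a}" using o True by auto
    then show ?thesis using perm_rank[OF p True] perm_rank[OF p' True] by simp
  next
    case False
    then show ?thesis using permutes_not_in[OF p] permutes_not_in[OF p'] by simp
  qed
qed

lemma sort_exists: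
  assumes m3: "m \<ge> 3" and x: "x \<in> GG m"
  shows "\<exists>\<sigma>. \<sigma> permutes {..<m} \<and> act \<sigma> x \<in> Gs m"
proof -
  have gx: "generic m x" using x unfolding GG_def by auto
  have "inj_on x {..<m}" unfolding inj_on_def using gen_distinct[OF m3 gx] by blast
  then obtain p where p: "p \<in> perms m" and ps: "\<forall>i. Suc i < m \<longrightarrow> x (p ! i) < x (p ! Suc i)"
    using sort_perm by blast
  have len: "length p = m" using perms_length[OF p] .
  have dp: "distinct p" "set p = {..<m}" using p unfolding perms_def by auto
  define \<sigma> where "\<sigma> i = (if i < m then p ! i else i)" for i
  have "bij_betw ((!) p) {..<m} {..<m}" using bij_betw_nth[OF dp(1)] len dp(2) by simp
  then have "bij_betw \<sigma> {..<m} {..<m}" by (rule bij_betw_cong[THEN iffD1, rotated]) (simp add: \<sigma>_def)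
  then have sp: "\<sigma> permutes {..<m}" by (rule bij_imp_permutes) (simp add: \<sigma>_def)
  have "act \<sigma> x \<in> Gs m" unfolding Gs_def using act_GG[OF sp x] ps unfolding act_def \<sigma>_def by auto
  then show ?thesis using sp by blast
qed

lemma count_perm:
  assumes m3: "m \<ge> 3"
  shows "card (sv m ` GG m) = fact m * card (sv m ` Gs m)"
proof -
  define P where "P = {\<pi>. \<pi> permutes {..<m}}"
  have fP: "finite P" unfolding P_def by (rule finite_permutations) simp
  have cP: "card P = fact m" unfolding P_def by (rule card_permutations) simp_all
  define A where "A \<pi> = sv m ` act \<pi> ` Gs m" for \<pi>
  have GGu: "GG m = (\<Union>\<pi>\<in>P. act \<pi> ` Gs m)"
  proof
    show "(\<Union>\<pi>\<in>P. act \<pi> ` Gs m) \<subseteq> GG m" using act_GG unfolding P_def Gs_def by blast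
    show "GG m \<subseteq> (\<Union>\<pi>\<in>P. act \<pi> ` Gs m)"
    proof
      fix x assume x: "x \<in> GG m"
      obtain \<sigma> where s: "\<sigma> permutes {..<m}" "act \<sigma> x \<in> Gs m" using sort_exists[OF m3 x] by blast
      have ai: "act (inv \<sigma>) (act \<sigma> x) = x" unfolding act_def using permutes_inverses(1)[OF s(1)] by simp
      have "inv \<sigma> \<in> P" unfolding P_def using permutes_inv[OF s(1)] by simp
      have "x \<in> act (inv \<sigma>) ` Gs m" by (rule rev_image_eqI[OF s(2)]) (simp add: ai)
      then show "x \<in> (\<Union>\<pi>\<in>P. act \<pi> ` Gs m)" using \<open>inv \<sigma> \<in> P\<close> by blast
    qed
  qed
  have "sv m ` GG m = (\<Union>\<pi>\<in>P. A \<pi>)" unfolding GGu A_def by auto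
  moreover have "card (\<Union>\<pi>\<in>P. A \<pi>) = (\<Sum>\<pi>\<in>P. card (A \<pi>))"
  proof (rule card_UN_disjoint[OF fP])
    show "\<forall>\<pi>\<in>P. finite (A \<pi>)" unfolding A_def using sv_fin by blast
    show "\<forall>\<pi>\<in>P. \<forall>\<pi>'\<in>P. \<pi> \<noteq> \<pi>' \<longrightarrow> A \<pi> \<inter> A \<pi>' = {}"
    proof (intro ballI impI)
      fix \<pi> \<pi>' assume pp: "\<pi> \<in> P" "\<pi>' \<in> P" "\<pi> \<noteq> \<pi>'"
      show "A \<pi> \<inter> A \<pi>' = {}"
      proof (rule ccontr)
        assume "A \<pi> \<inter> A \<pi>' \<noteq> {}"
        then obtain x y where x: "x \<in> Gs m" and y: "y \<in> Gs m" and e: "sv m (act \<pi> x) = sv m (act \<pi>' y)"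
          unfolding A_def by auto
        have sx: "\<forall>i. Suc i < m \<longrightarrow> x i < x (Suc i)" and sy: "\<forall>i. Suc i < m \<longrightarrow> y i < y (Suc i)"
          using x y unfolding Gs_def by auto
        have p1: "\<pi> permutes {..<m}" and p2: "\<pi>' permutes {..<m}" using pp unfolding P_def by auto
        have "\<forall>a b. a<m \<longrightarrow> b<m \<longrightarrow> (\<pi> a < \<pi> b \<longleftrightarrow> \<pi>' a < \<pi>' b)"
        proof (intro allI impI)
          fix a b assume ab: "a<m" "b<m"
          have "sgn (act \<pi> x a + act \<pi> x a - act \<pi> x b - act \<pi> x b) = sgn (act \<pi>' y a + act \<pi>' y a - act \<pi>' y b - act \<pi>' y b)"
            using e[unfolded sv_eq sveq_def] ab by blast
          then have "sgn (x (\<pi> a) - x (\<pi> b)) = sgn (y (\<pi>' a) - y (\<pi>' b))"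
            unfolding act_def sgn_two .
          then have "x (\<pi> a) - x (\<pi> b) < 0 \<longleftrightarrow> y (\<pi>' a) - y (\<pi>' b) < 0" using sgn_eqD by blast
          then have "x (\<pi> a) < x (\<pi> b) \<longleftrightarrow> y (\<pi>' a) < y (\<pi>' b)" by simp
          moreover have "\<pi> a < m" "\<pi> b < m" "\<pi>' a < m" "\<pi>' b < m"
            using permutes_in_image[OF p1] permutes_in_image[OF p2] ab by auto
          ultimately show "\<pi> a < \<pi> b \<longleftrightarrow> \<pi>' a < \<pi>' b" using sorted_iff[OF sx] sorted_iff[OF sy] by simp
        qed
        then show False using perm_order_eq[OF p1 p2] pp(3) by simp
      qed
    qed
  qed
  moreover have "card (A \<pi>) = card (sv m ` Gs m)" if "\<pi> \<in> P" for \<pi>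
  proof -
    have p1: "\<pi> permutes {..<m}" using that unfolding P_def by auto
    have "card (A \<pi>) = card ((\<lambda>x. sv m (act \<pi> x)) ` Gs m)" unfolding A_def image_image ..
    also have "\<dots> = card (sv m ` Gs m)"
      using card_eq_kernel[of "Gs m" "\<lambda>x. sv m (act \<pi> x)" "sv m"] sv_act[OF p1] by simp
    finally show ?thesis .
  qed
  ultimately show ?thesis using cP by simp
qed

theorem theorem3p2:
  fixes m :: nat
  assumes "m \<ge> 3"
  shows "real (r m) = fact m / 2 * real (r0 m) \<and>
         real (r m) = real (card (chambers m)) / 2"
proof -
  have a: "card (chambers m) = 2 * r m"
    using card_chambers[OF assms] count2[OF assms] r_count[OF assms] by simp
  have b: "2 * r m = fact m * r0 m"
    using count_perm[OF assms] count2[OF assms] r_count[OF assms] r0_count[OF assms] by simp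
  have "real (2 * r m) = real (fact m * r0 m)" using b by simp
  then have "2 * real (r m) = fact m * real (r0 m)" by (simp add: of_nat_mult)
  then show ?thesis using a by simp
qed

end
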